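(* Let $V=(J,(V_j)_{j\in J},d,H)$ be a hypergraph system, $(\nu_e)_{e\in H}$ a pseudorandom system of measures on $V$, and for each $e\in H$ let $f_e:V_e\to\mathbb{R}$ satisfy $|f_e(x_e)|\le\nu_e(x_e)$ for all $x_e\in V_e$. For $J'\subseteq J$ define $$Q_{J'}:=\mathbb{E}\Big(\prod_{e\in H:\,J'\subseteq e}\ \prod_{\omega\in\{0,1\}^{J'}}f_e(x^{(\omega)}_e)\prod_{e\in H:\,J'\not\subseteq e}\ \prod_{\omega\in\{0,1\}^{e\cap J'}}\nu_e(x^{(\omega)}_e)\ \Big|\ x^{(0)}_J,x^{(1)}_J\in V_J,\ x^{(0)}_{J\setminus J'}=x^{(1)}_{J\setminus J'}\Big),$$ where in $x^{(\omega)}_e$ the tuple $\omega$ (defined on $J'$ or on $e\cap J'$) is extended arbitrarily to $e$ (the choice is irrelevant since $x^{(0)}_{J\setminus J'}=x^{(1)}_{J\setminus J'}$). Then for every $J'\subsetneq J$ and every $j_0\in J\setminus J'$, $$|Q_{J'}|\le(1+o_{N\to\infty}(1))\,|Q_{J'\cup\{j_0\}}|^{1/2}.$$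
   Context: A hypergraph system is a quadruple $V=(J,(V_j)_{j\in J},d,H)$ where $J$ is a finite set, each $V_j$ is a finite nonempty set, $d\ge1$ is an integer and $H\subseteq\binom{J}{d}:=\{e\subseteq J:|e|=d\}$; for $e\subseteq J$ put $V_e:=\prod_{j\in e}V_j$. For a finite nonempty set $Z$ and $f:Z\to\mathbb{R}$, $\mathbb{E}(f(x)\mid x\in Z):=|Z|^{-1}\sum_{x\in Z}f(x)$; constraints written after the bar mean uniform averaging over all tuples satisfying them. All objects depend on a parameter $N$ ranging over a sequence tending to infinity while $J,d,H$ are fixed; implicit constants may depend on $J$; $o_{N\to\infty}(1)$ is a quantity tending to $0$ as $N\to\infty$ uniformly in the $f_e$; $O_K(1)$ is a quantity bounded by a constant depending on $K$ (and $J$). Cube notation: for a finite set $e$, $\{0,1\}^e$ is the set of tuples $\omega=(\omega_j)_{j\in e}$ with $\omega_j\in\{0,1\}$, and $0^e$ is the all-zero tuple; for $x^{(0)}_J=(x^{(0)}_j)_{j\in J},x^{(1)}_J\in V_J$, $e\subseteq J$ and $\omega\in\{0,1\}^e$, set $x^{(\omega)}_e:=(x^{(\omega_j)}_j)_{j\in e}\in V_e$ and $x^{(a)}_e:=(x^{(a)}_j)_{j\in e}$ for $a\in\{0,1\}$. A system of measures is a family of functions $\nu_e:V_e\to[0,\infty)$, $e\in H$, with $\mathbb{E}(\nu_e(x_e)\mid x_e\in V_e)=1+o_{N\to\infty}(1)$. For $e\in H$ and $f:V_e\to\mathbb{R}$, $\mathcal{D}_ef(x^{(0)}_e):=\mathbb{E}\big(\prod_{\omega\in\{0,1\}^e,\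 \omega\neq 0^e}f(x^{(\omega)}_e)\mid x^{(1)}_e\in V_e\big)$. The system is pseudorandom if: (i) $\mathcal{D}_e(\nu_e+1)(x_e)=O(1)$ for all $e\in H$, $x_e\in V_e$; (ii) for every choice of exponents $n_{e,\omega}\in\{0,1\}$, $\mathbb{E}\big(\prod_{e\in H}\prod_{\omega\in\{0,1\}^e}\nu_e(x^{(\omega)}_e)^{n_{e,\omega}}\mid x^{(0)}_J,x^{(1)}_J\in V_J\big)=1+o_{N\to\infty}(1)$; (iii) for every $e\in H$, $j\in e$, every choice of $n_{e,\omega}\in\{0,1\}$ and every integer $K\ge0$, $\mathbb{E}\Big(\mathbb{E}\big(\prod_{\omega\in\{0,1\}^e}\nu_e(x^{(\omega)}_e)^{n_{e,\omega}}\mid x^{(0)}_j,x^{(1)}_j\in V_j\big)^K\ \Big|\ x^{(0)}_{e\setminus\{j\}},x^{(1)}_{e\setminus\{j\}}\in V_{e\setminus\{j\}}\Big)=O_K(1)$. *)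

theory Defs
  imports "HOL-Analysis.Analysis"
begin

definition avg :: "'a set \<Rightarrow> ('a \<Rightarrow> real) \<Rightarrow> real" where
  "avg Z f = (\<Sum>x\<in>Z. f x) / real (card Z)"

text \<open>Points of V_e are functions on e (extensional, undefined outside e).\<close>
definition Vpts :: "('j \<Rightarrow> 'v set) \<Rightarrow> 'j set \<Rightarrow> ('j \<Rightarrow> 'v) set" where
  "Vpts V e = PiE e V"

text \<open>The cube {0,1}^e, with 0 encoded as False and 1 as True.\<close>
definition cube :: "'j set \<Rightarrow> ('j \<Rightarrow> bool) set" where
  "cube e = PiE e (\<lambda>_. UNIV)"

definition zero_vertex :: "'j set \<Rightarrow> ('j \<Rightarrow> bool)" where
  "zero_vertex e = restrict (\<lambda>_. False) e"

definition cpt :: "'j set \<Rightarrow> ('j \<Rightarrow> 'v) \<Rightarrow> ('j \<Rightarrow> 'v) \<Rightarrow> ('j \<Rightarrow> bool) \<Rightarrow> ('j \<Rightarrow> 'v)" where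
  "cpt e x0 x1 \<omega> = restrict (\<lambda>j. if \<omega> j then x1 j else x0 j) e"

definition hypergraph_system ::
  "'j set \<Rightarrow> (nat \<Rightarrow> 'j \<Rightarrow> 'v set) \<Rightarrow> nat \<Rightarrow> 'j set set \<Rightarrow> bool" where
  "hypergraph_system J V d H \<longleftrightarrow> finite J \<and> d \<ge> 1 \<and>
     (\<forall>N. \<forall>j\<in>J. finite (V N j) \<and> V N j \<noteq> {}) \<and>
     H \<subseteq> {e. e \<subseteq> J \<and> card e = d}"

definition Dop :: "('j \<Rightarrow> 'v set) \<Rightarrow> 'j set \<Rightarrow> (('j \<Rightarrow> 'v) \<Rightarrow> real) \<Rightarrow> ('j \<Rightarrow> 'v) \<Rightarrow> real" where
  "Dop V e f x0 = avg (Vpts V e)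
     (\<lambda>x1. \<Prod>\<omega>\<in>cube e - {zero_vertex e}. f (cpt e x0 x1 \<omega>))"

definition system_of_measures ::
  "'j set \<Rightarrow> (nat \<Rightarrow> 'j \<Rightarrow> 'v set) \<Rightarrow> 'j set set \<Rightarrow> (nat \<Rightarrow> 'j set \<Rightarrow> ('j \<Rightarrow> 'v) \<Rightarrow> real) \<Rightarrow> bool" where
  "system_of_measures J V H \<nu> \<longleftrightarrow>
     (\<forall>N. \<forall>e\<in>H. \<forall>x\<in>Vpts (V N) e. \<nu> N e x \<ge> 0) \<and>
     (\<forall>e\<in>H. (\<lambda>N. avg (Vpts (V N) e) (\<nu> N e)) \<longlonglongrightarrow> 1)"

text \<open>Pseudorandomness conditions (i)--(iii); O(1) means bounded for all sufficiently large N.\<close>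
definition pseudorandom ::
  "'j set \<Rightarrow> (nat \<Rightarrow> 'j \<Rightarrow> 'v set) \<Rightarrow> 'j set set \<Rightarrow> (nat \<Rightarrow> 'j set \<Rightarrow> ('j \<Rightarrow> 'v) \<Rightarrow> real) \<Rightarrow> bool" where
  "pseudorandom J V H \<nu> \<longleftrightarrow>
     system_of_measures J V H \<nu> \<and>
     (\<exists>C. \<forall>\<^sub>F N in sequentially. \<forall>e\<in>H. \<forall>x\<in>Vpts (V N) e.
         \<bar>Dop (V N) e (\<lambda>y. \<nu> N e y + 1) x\<bar> \<le> C) \<and>
     (\<forall>n :: 'j set \<Rightarrow> ('j \<Rightarrow> bool) \<Rightarrow> bool.
        (\<lambda>N. avg (Vpts (V N) J \<times> Vpts (V N) J)
           (\<lambda>(x0, x1). \<Prod>e\<in>H. \<Prod>\<omega>\<in>cube e.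
               if n e \<omega> then \<nu> N e (cpt e x0 x1 \<omega>) else 1)) \<longlonglongrightarrow> 1) \<and>
     (\<forall>e\<in>H. \<forall>j\<in>e. \<forall>n :: ('j \<Rightarrow> bool) \<Rightarrow> bool. \<forall>K::nat.
        \<exists>C. \<forall>\<^sub>F N in sequentially.
          \<bar>avg (Vpts (V N) (e - {j}) \<times> Vpts (V N) (e - {j}))
             (\<lambda>(y0, y1). (avg (V N j \<times> V N j)
                (\<lambda>(a, b). \<Prod>\<omega>\<in>cube e.
                   if n \<omega> then \<nu> N e (cpt e (y0(j := a)) (y1(j := b)) \<omega>) else 1)) ^ K)\<bar> \<le> C)"

definition Q ::
  "'j set \<Rightarrow> ('j \<Rightarrow> 'v set) \<Rightarrow> 'j set set \<Rightarrow> ('j set \<Rightarrow> ('j \<Rightarrow> 'v) \<Rightarrow> real)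
     \<Rightarrow> ('j set \<Rightarrow> ('j \<Rightarrow> 'v) \<Rightarrow> real) \<Rightarrow> 'j set \<Rightarrow> real" where
  "Q J V H \<nu> f J' = avg {(x0, x1). x0 \<in> Vpts V J \<and> x1 \<in> Vpts V J \<and> (\<forall>j\<in>J - J'. x0 j = x1 j)}
     (\<lambda>(x0, x1).
        (\<Prod>e\<in>{e\<in>H. J' \<subseteq> e}. \<Prod>\<omega>\<in>cube J'. f e (cpt e x0 x1 \<omega>)) *
        (\<Prod>e\<in>{e\<in>H. \<not> J' \<subseteq> e}. \<Prod>\<omega>\<in>cube (e \<inter> J'). \<nu> e (cpt e x0 x1 \<omega>)))"

end

theory Submission
  imports Defs
begin

lemma cs_weighted:
  fixes A W s :: "'u \<Rightarrow> real"
  assumes "\<And>u. u \<in> U \<Longrightarrow> \<bar>A u\<bar> \<le> W u"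
  shows "(\<Sum>u\<in>U. A u * s u)\<^sup>2 \<le> (\<Sum>u\<in>U. W u) * (\<Sum>u\<in>U. W u * (s u)\<^sup>2)"
proof -
  have W0: "u \<in> U \<Longrightarrow> 0 \<le> W u" for u using assms[of u] by linarith
  have "\<bar>\<Sum>u\<in>U. A u * s u\<bar> \<le> (\<Sum>u\<in>U. \<bar>A u * s u\<bar>)" by (rule sum_abs)
  also have "\<dots> \<le> (\<Sum>u\<in>U. sqrt (W u) * (sqrt (W u) * \<bar>s u\<bar>))"
    apply (rule sum_mono)
    using assms W0 by (simp add: abs_mult mult_right_mono flip: mult.assoc)
  finally have 1: "\<bar>\<Sum>u\<in>U. A u * s u\<bar> \<le> (\<Sum>u\<in>U. sqrt (W u) * (sqrt (W u) * \<bar>s u\<bar>))" .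
  have 2: "0 \<le> \<bar>\<Sum>u\<in>U. A u * s u\<bar>" by simp
  have "(\<Sum>u\<in>U. A u * s u)\<^sup>2 = \<bar>\<Sum>u\<in>U. A u * s u\<bar>\<^sup>2" by simp
  also have "\<dots> \<le> (\<Sum>u\<in>U. sqrt (W u) * (sqrt (W u) * \<bar>s u\<bar>))\<^sup>2"
    using 1 2 by (rule power_mono)
  also have "\<dots> \<le> (\<Sum>u\<in>U. (sqrt (W u))\<^sup>2) * (\<Sum>u\<in>U. (sqrt (W u) * \<bar>s u\<bar>)\<^sup>2)"
    by (rule Cauchy_Schwarz_ineq_sum)
  also have "\<dots> = (\<Sum>u\<in>U. W u) * (\<Sum>u\<in>U. W u * (s u)\<^sup>2)"
    using W0 by (simp add: power_mult_distrib)
  finally show ?thesis .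
qed

lemma cpt_upd_notin: "j0 \<notin> e \<Longrightarrow> cpt e (x0(j0:=a)) (x1(j0:=b)) w = cpt e x0 x1 w"
  unfolding cpt_def by (auto simp: restrict_def intro!: ext)

lemma cpt_in_Vpts: "e \<subseteq> J \<Longrightarrow> x0 \<in> PiE J V \<Longrightarrow> x1 \<in> PiE J V \<Longrightarrow> cpt e x0 x1 w \<in> Vpts V e"
  unfolding cpt_def Vpts_def by (auto simp: PiE_iff)

lemma finite_cube: "finite K \<Longrightarrow> finite (cube K)"
  unfolding cube_def by (simp add: finite_PiE)

lemma prod_cube_insert:
  assumes "a \<notin> K" "finite K"
  shows "(\<Prod>w\<in>cube (insert a K). g w) = (\<Prod>w\<in>cube K. g (w(a:=False)) * g (w(a:=True)))"
proof -
  have "(\<Prod>w\<in>cube (insert a K). g w) = (\<Prod>p\<in>UNIV \<times> cube K. g ((\<lambda>(y, h). h(a := y)) p))"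
    unfolding cube_def PiE_insert_eq
    by (subst prod.reindex) (use inj_combinator[OF assms(1), of "\<lambda>_. UNIV"] in auto)
  also have "\<dots> = (\<Prod>b\<in>UNIV. \<Prod>w\<in>cube K. g (w(a:=b)))"
    by (simp add: prod.cartesian_product split_def)
  also have "\<dots> = (\<Prod>w\<in>cube K. g (w(a:=False))) * (\<Prod>w\<in>cube K. g (w(a:=True)))"
    by (simp add: UNIV_bool)
  also have "\<dots> = (\<Prod>w\<in>cube K. g (w(a:=False)) * g (w(a:=True)))"
    by (simp add: prod.distrib)
  finally show ?thesis .
qed

lemma cpt_split_F: "cpt e (x0(a:=y0)) (x1(a:=y1)) (w(a:=False)) = cpt e (x0(a:=y0)) (x1(a:=y0)) w"
  unfolding cpt_def by (auto simp: restrict_def intro!: ext)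
lemma cpt_split_T: "cpt e (x0(a:=y0)) (x1(a:=y1)) (w(a:=True)) = cpt e (x0(a:=y1)) (x1(a:=y1)) w"
  unfolding cpt_def by (auto simp: restrict_def intro!: ext)

definition Fp :: "'j set \<Rightarrow> ('j set \<Rightarrow> ('j \<Rightarrow> 'v) \<Rightarrow> real) \<Rightarrow> 'j set \<Rightarrow> ('j \<Rightarrow> 'v) \<Rightarrow> ('j \<Rightarrow> 'v) \<Rightarrow> real" where
  "Fp J' f e x0 x1 = (\<Prod>w\<in>cube J'. f e (cpt e x0 x1 w))"
definition Np :: "'j set \<Rightarrow> ('j set \<Rightarrow> ('j \<Rightarrow> 'v) \<Rightarrow> real) \<Rightarrow> 'j set \<Rightarrow> ('j \<Rightarrow> 'v) \<Rightarrow> ('j \<Rightarrow> 'v) \<Rightarrow> real" where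
  "Np J' nu e x0 x1 = (\<Prod>w\<in>cube (e \<inter> J'). nu e (cpt e x0 x1 w))"
definition Wf where
  "Wf H J' nu j0 x0 x1 = (\<Prod>e\<in>{e\<in>H. j0 \<notin> e}. Np J' nu e x0 x1)"
definition Af where
  "Af H J' f nu j0 x0 x1 = (\<Prod>e\<in>{e\<in>H. J' \<subseteq> e \<and> j0 \<notin> e}. Fp J' f e x0 x1) *
     (\<Prod>e\<in>{e\<in>H. \<not> J' \<subseteq> e \<and> j0 \<notin> e}. Np J' nu e x0 x1)"
definition Bf where
  "Bf H J' f nu j0 x0 x1 y = (\<Prod>e\<in>{e\<in>H. J' \<subseteq> e \<and> j0 \<in> e}. Fp J' f e (x0(j0:=y)) (x1(j0:=y))) *
     (\<Prod>e\<in>{e\<in>H. \<not> J' \<subseteq> e \<and> j0 \<in> e}. Np J' nu e (x0(j0:=y)) (x1(j0:=y)))"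

lemma prod_split_pred:
  assumes "finite A"
  shows "prod g {e\<in>A. P e} = prod g {e\<in>A. P e \<and> \<not> R e} * prod g {e\<in>A. P e \<and> R e}"
proof -
  have "{e\<in>A. P e} = {e\<in>A. P e \<and> \<not> R e} \<union> {e\<in>A. P e \<and> R e}" by auto
  then show ?thesis using assms by (simp add: prod.union_disjoint[symmetric] Int_def)
qed

lemma integrand1:
  assumes "finite H"
  shows "(\<Prod>e\<in>{e\<in>H. J' \<subseteq> e}. \<Prod>w\<in>cube J'. f e (cpt e (x0(j0:=y)) (x1(j0:=y)) w)) *
    (\<Prod>e\<in>{e\<in>H. \<not> J' \<subseteq> e}. \<Prod>w\<in>cube (e \<inter> J'). nu e (cpt e (x0(j0:=y)) (x1(j0:=y)) w))
    = Af H J' f nu j0 x0 x1 * Bf H J' f nu j0 x0 x1 y"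
proof -
  have a: "(\<Prod>e\<in>{e\<in>H. J' \<subseteq> e \<and> j0 \<notin> e}. Fp J' f e (x0(j0:=y)) (x1(j0:=y))) = (\<Prod>e\<in>{e\<in>H. J' \<subseteq> e \<and> j0 \<notin> e}. Fp J' f e x0 x1)"
    by (rule prod.cong) (auto simp: Fp_def cpt_upd_notin)
  have b: "(\<Prod>e\<in>{e\<in>H. \<not> J' \<subseteq> e \<and> j0 \<notin> e}. Np J' nu e (x0(j0:=y)) (x1(j0:=y))) = (\<Prod>e\<in>{e\<in>H. \<not> J' \<subseteq> e \<and> j0 \<notin> e}. Np J' nu e x0 x1)"
    by (rule prod.cong) (auto simp: Np_def cpt_upd_notin)
  show ?thesis
    using prod_split_pred[OF assms, of "\<lambda>e. Fp J' f e (x0(j0:=y)) (x1(j0:=y))" "\<lambda>e. J' \<subseteq> e" "\<lambda>e. j0 \<in> e"]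
      prod_split_pred[OF assms, of "\<lambda>e. Np J' nu e (x0(j0:=y)) (x1(j0:=y))" "\<lambda>e. \<not> J' \<subseteq> e" "\<lambda>e. j0 \<in> e"] a b
    unfolding Af_def Bf_def by (simp add: Fp_def Np_def mult_ac)
qed

lemma integrand2:
  assumes "finite H" "finite J'" "j0 \<notin> J'"
  shows "(\<Prod>e\<in>{e\<in>H. insert j0 J' \<subseteq> e}. \<Prod>w\<in>cube (insert j0 J'). f e (cpt e (x0(j0:=y0)) (x1(j0:=y1)) w)) *
    (\<Prod>e\<in>{e\<in>H. \<not> insert j0 J' \<subseteq> e}. \<Prod>w\<in>cube (e \<inter> insert j0 J'). nu e (cpt e (x0(j0:=y0)) (x1(j0:=y1)) w))
    = Wf H J' nu j0 x0 x1 * (Bf H J' f nu j0 x0 x1 y0 * Bf H J' f nu j0 x0 x1 y1)"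
proof -
  have s1: "{e\<in>H. insert j0 J' \<subseteq> e} = {e\<in>H. J' \<subseteq> e \<and> j0 \<in> e}" by auto
  have s2: "{e\<in>H. \<not> insert j0 J' \<subseteq> e} = {e\<in>H. j0 \<notin> e} \<union> {e\<in>H. \<not> J' \<subseteq> e \<and> j0 \<in> e}" by auto
  have p1: "(\<Prod>w\<in>cube (insert j0 J'). f e (cpt e (x0(j0:=y0)) (x1(j0:=y1)) w))
     = Fp J' f e (x0(j0:=y0)) (x1(j0:=y0)) * Fp J' f e (x0(j0:=y1)) (x1(j0:=y1))" for e
    unfolding Fp_def prod_cube_insert[OF assms(3,2)] cpt_split_F cpt_split_T by (simp add: prod.distrib)
  have p2: "(\<Prod>w\<in>cube (e \<inter> insert j0 J'). nu e (cpt e (x0(j0:=y0)) (x1(j0:=y1)) w))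
     = Np J' nu e x0 x1" if "j0 \<notin> e" for e
    using that unfolding Np_def by (simp add: cpt_upd_notin)
  have p3: "(\<Prod>w\<in>cube (e \<inter> insert j0 J'). nu e (cpt e (x0(j0:=y0)) (x1(j0:=y1)) w))
     = Np J' nu e (x0(j0:=y0)) (x1(j0:=y0)) * Np J' nu e (x0(j0:=y1)) (x1(j0:=y1))" if "j0 \<in> e" for e
  proof -
    have "e \<inter> insert j0 J' = insert j0 (e \<inter> J')" using that by auto
    moreover have "finite (e \<inter> J')" "j0 \<notin> e \<inter> J'" using assms by auto
    ultimately show ?thesis
      unfolding Np_def by (simp add: prod_cube_insert cpt_split_F cpt_split_T prod.distrib)
  qed
  have d: "{e\<in>H. j0 \<notin> e} \<inter> {e\<in>H. \<not> J' \<subseteq> e \<and> j0 \<in> e} = {}" by auto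
  have fin: "finite {e\<in>H. j0 \<notin> e}" "finite {e\<in>H. \<not> J' \<subseteq> e \<and> j0 \<in> e}" using assms by auto
  have "(\<Prod>e\<in>{e\<in>H. \<not> insert j0 J' \<subseteq> e}. \<Prod>w\<in>cube (e \<inter> insert j0 J'). nu e (cpt e (x0(j0:=y0)) (x1(j0:=y1)) w))
     = (\<Prod>e\<in>{e\<in>H. j0 \<notin> e}. \<Prod>w\<in>cube (e \<inter> insert j0 J'). nu e (cpt e (x0(j0:=y0)) (x1(j0:=y1)) w)) *
       (\<Prod>e\<in>{e\<in>H. \<not> J' \<subseteq> e \<and> j0 \<in> e}. \<Prod>w\<in>cube (e \<inter> insert j0 J'). nu e (cpt e (x0(j0:=y0)) (x1(j0:=y1)) w))"
    unfolding s2 by (rule prod.union_disjoint[OF fin d])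
  also have "\<dots> = Wf H J' nu j0 x0 x1 * (\<Prod>e\<in>{e\<in>H. \<not> J' \<subseteq> e \<and> j0 \<in> e}. Np J' nu e (x0(j0:=y0)) (x1(j0:=y0)) * Np J' nu e (x0(j0:=y1)) (x1(j0:=y1)))"
    unfolding Wf_def using p2 p3 by (intro arg_cong2[where f="(*)"] prod.cong refl) blast+
  finally have q2: "(\<Prod>e\<in>{e\<in>H. \<not> insert j0 J' \<subseteq> e}. \<Prod>w\<in>cube (e \<inter> insert j0 J'). nu e (cpt e (x0(j0:=y0)) (x1(j0:=y1)) w))
    = Wf H J' nu j0 x0 x1 * (\<Prod>e\<in>{e\<in>H. \<not> J' \<subseteq> e \<and> j0 \<in> e}. Np J' nu e (x0(j0:=y0)) (x1(j0:=y0)) * Np J' nu e (x0(j0:=y1)) (x1(j0:=y1)))" .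
  have q1: "(\<Prod>e\<in>{e\<in>H. insert j0 J' \<subseteq> e}. \<Prod>w\<in>cube (insert j0 J'). f e (cpt e (x0(j0:=y0)) (x1(j0:=y1)) w))
    = (\<Prod>e\<in>{e\<in>H. J' \<subseteq> e \<and> j0 \<in> e}. Fp J' f e (x0(j0:=y0)) (x1(j0:=y0)) * Fp J' f e (x0(j0:=y1)) (x1(j0:=y1)))"
    unfolding s1 p1 ..
  show ?thesis unfolding q1 q2 Bf_def by (simp add: prod.distrib mult_ac)
qed

lemma G_inner:
  assumes eJ: "e \<subseteq> J" and fe: "finite e" and j0e: "j0 \<notin> e"
    and agree: "\<forall>j\<in>J-J'. x0 j = x1 j" and agree': "\<forall>j\<in>J'. x1' j = x1 j"
  shows "(\<Prod>w\<in>cube e. if j0 \<notin> e \<and> (\<forall>j\<in>e - J'. \<not> w j) then nu e (cpt e x0 x1' w) else 1)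
    = Np J' nu e x0 x1"
proof -
  define ext where "ext w' = restrict (\<lambda>j. if j \<in> J' then w' j else False) e" for w' :: "'a \<Rightarrow> bool"
  have bij: "bij_betw ext (cube (e \<inter> J')) {w\<in>cube e. \<forall>j\<in>e - J'. \<not> w j}"
  proof (rule bij_betw_byWitness[where f'="\<lambda>w. restrict w (e \<inter> J')"])
    show "\<forall>a\<in>cube (e \<inter> J'). restrict (ext a) (e \<inter> J') = a"
      by (auto simp: ext_def cube_def PiE_def extensional_def restrict_def fun_eq_iff)
    show "\<forall>a'\<in>{w \<in> cube e. \<forall>j\<in>e - J'. \<not> w j}. ext (restrict a' (e \<inter> J')) = a'"
      by (auto simp: ext_def cube_def PiE_def extensional_def restrict_def fun_eq_iff)
    show "ext ` cube (e \<inter> J') \<subseteq> {w \<in> cube e. \<forall>j\<in>e - J'. \<not> w j}"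
      by (auto simp: ext_def cube_def)
    show "(\<lambda>w. restrict w (e \<inter> J')) ` {w \<in> cube e. \<forall>j\<in>e - J'. \<not> w j} \<subseteq> cube (e \<inter> J')"
      by (auto simp: cube_def)
  qed
  have cp: "cpt e x0 x1' (ext w') = cpt e x0 x1 w'" for w'
    using eJ agree agree' unfolding cpt_def ext_def by (auto simp: restrict_def fun_eq_iff)
  have "(\<Prod>w\<in>cube e. if j0 \<notin> e \<and> (\<forall>j\<in>e - J'. \<not> w j) then nu e (cpt e x0 x1' w) else 1)
     = (\<Prod>w\<in>{w\<in>cube e. \<forall>j\<in>e - J'. \<not> w j}. nu e (cpt e x0 x1' w))"
    using j0e fe by (simp add: prod.inter_filter finite_cube)
  also have "\<dots> = (\<Prod>w\<in>cube (e \<inter> J'). nu e (cpt e x0 x1' (ext w)))"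
    by (rule prod.reindex_bij_betw[OF bij, symmetric])
  also have "\<dots> = Np J' nu e x0 x1" unfolding Np_def cp ..
  finally show ?thesis .
qed

lemma G_point:
  assumes HJ: "\<And>e. e \<in> H \<Longrightarrow> e \<subseteq> J" and fJ: "finite J"
    and agree: "\<forall>j\<in>J-J'. x0 j = x1 j" and agree': "\<forall>j\<in>J'. x1' j = x1 j"
  shows "(\<Prod>e\<in>H. \<Prod>w\<in>cube e. if j0 \<notin> e \<and> (\<forall>j\<in>e - J'. \<not> w j) then nu e (cpt e x0 x1' w) else 1)
    = Wf H J' nu j0 x0 x1"
proof -
  have fH: "finite H" using HJ fJ by (meson Pow_iff finite_Pow_iff rev_finite_subset subsetI)
  have "(\<Prod>e\<in>H. \<Prod>w\<in>cube e. if j0 \<notin> e \<and> (\<forall>j\<in>e - J'. \<not> w j) then nu e (cpt e x0 x1' w) else 1)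
     = (\<Prod>e\<in>H. if j0 \<notin> e then Np J' nu e x0 x1 else 1)"
  proof (rule prod.cong[OF refl])
    fix e assume e: "e \<in> H"
    show "(\<Prod>w\<in>cube e. if j0 \<notin> e \<and> (\<forall>j\<in>e - J'. \<not> w j) then nu e (cpt e x0 x1' w) else 1)
     = (if j0 \<notin> e then Np J' nu e x0 x1 else 1)"
    proof (cases "j0 \<in> e")
      case False
      then show ?thesis using G_inner[OF HJ[OF e] _ False agree agree'] HJ[OF e] fJ
        by (simp add: finite_subset)
    qed simp
  qed
  also have "\<dots> = Wf H J' nu j0 x0 x1"
    unfolding Wf_def using fH by (simp add: prod.inter_filter)
  finally show ?thesis .
qed

lemma G_avg:
  fixes V :: "'j \<Rightarrow> 'v set" and nu :: "'j set \<Rightarrow> ('j \<Rightarrow> 'v) \<Rightarrow> real"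
  assumes HJ: "\<And>e. e \<in> H \<Longrightarrow> e \<subseteq> J" and fJ: "finite J"
    and finV: "\<And>j. j \<in> J \<Longrightarrow> finite (V j)" and neV: "\<And>j. j \<in> J \<Longrightarrow> V j \<noteq> {}"
    and J'J: "J' \<subseteq> J"
  shows "avg (Vpts V J \<times> Vpts V J) (\<lambda>(x0, x1). \<Prod>e\<in>H. \<Prod>w\<in>cube e. if j0 \<notin> e \<and> (\<forall>j\<in>e - J'. \<not> w j) then nu e (cpt e x0 x1 w) else 1)
    = avg {(x0, x1). x0 \<in> Vpts V J \<and> x1 \<in> Vpts V J \<and> (\<forall>j\<in>J - J'. x0 j = x1 j)} (\<lambda>(x0, x1). Wf H J' nu j0 x0 x1)"
proof -
  define S where "S = {(x0, x1). x0 \<in> Vpts V J \<and> x1 \<in> Vpts V J \<and> (\<forall>j\<in>J - J'. x0 j = x1 j)}"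
  define T where "T = PiE (J - J') V"
  define G where "G = (\<lambda>(x0, x1). \<Prod>e\<in>H. \<Prod>w\<in>cube e. if j0 \<notin> e \<and> (\<forall>j\<in>e - J'. \<not> w j) then nu e (cpt e x0 x1 w) else (1::real))"
  define \<Phi> where "\<Phi> = (\<lambda>((x0, x1), z). (x0::'j\<Rightarrow>'v, \<lambda>j. if j \<in> J' then (x1::'j\<Rightarrow>'v) j else (z::'j\<Rightarrow>'v) j))"
  define \<Psi> where "\<Psi> = (\<lambda>(x0::'j\<Rightarrow>'v, x1::'j\<Rightarrow>'v). ((x0, \<lambda>j. if j \<in> J' then x1 j else x0 j), restrict x1 (J - J')))"
  have bij: "bij_betw \<Phi> (S \<times> T) (Vpts V J \<times> Vpts V J)"
  proof (rule bij_betw_byWitness[where f'=\<Psi>])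
    show "\<forall>a\<in>S \<times> T. \<Psi> (\<Phi> a) = a"
      using J'J by (auto simp: \<Phi>_def \<Psi>_def S_def T_def Vpts_def PiE_def extensional_def restrict_def fun_eq_iff) (metis DiffI)
    show "\<forall>a'\<in>Vpts V J \<times> Vpts V J. \<Phi> (\<Psi> a') = a'"
      using J'J by (auto simp: \<Phi>_def \<Psi>_def S_def T_def Vpts_def PiE_def extensional_def restrict_def fun_eq_iff)
    show "\<Phi> ` (S \<times> T) \<subseteq> Vpts V J \<times> Vpts V J"
      using J'J by (auto simp: \<Phi>_def S_def T_def Vpts_def PiE_def extensional_def Pi_def)
    show "\<Psi> ` (Vpts V J \<times> Vpts V J) \<subseteq> S \<times> T"
      using J'J by (auto simp: \<Psi>_def S_def T_def Vpts_def PiE_def extensional_def Pi_def)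
  qed
  have finS: "finite S"
  proof -
    have "S \<subseteq> Vpts V J \<times> Vpts V J" by (auto simp: S_def)
    moreover have "finite (Vpts V J)" using fJ finV by (simp add: Vpts_def finite_PiE)
    ultimately show ?thesis by (meson finite_SigmaI rev_finite_subset)
  qed
  have finT: "finite T" unfolding T_def using fJ finV by (intro finite_PiE) auto
  have neT: "T \<noteq> {}" using neV by (simp add: T_def PiE_eq_empty_iff)
  have "(\<Sum>p\<in>Vpts V J \<times> Vpts V J. G p) = (\<Sum>p\<in>S \<times> T. G (\<Phi> p))"
    by (rule sum.reindex_bij_betw[OF bij, symmetric])
  also have "\<dots> = (\<Sum>p\<in>S \<times> T. (\<lambda>(x0, x1). Wf H J' nu j0 x0 x1) (fst p))"
  proof (rule sum.cong[OF refl])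
    fix p assume "p \<in> S \<times> T"
    then obtain x0 x1 z where p: "p = ((x0, x1), z)" and "(x0, x1) \<in> S" by auto
    then have "\<forall>j\<in>J-J'. x0 j = x1 j" by (auto simp: S_def)
    then show "G (\<Phi> p) = (\<lambda>(x0, x1). Wf H J' nu j0 x0 x1) (fst p)"
      unfolding p G_def \<Phi>_def by (simp add: G_point[OF HJ fJ])
  qed
  also have "\<dots> = real (card T) * (\<Sum>p\<in>S. (\<lambda>(x0, x1). Wf H J' nu j0 x0 x1) p)"
  proof -
    have "(\<Sum>p\<in>S \<times> T. (\<lambda>(x0, x1). Wf H J' nu j0 x0 x1) (fst p)) = (\<Sum>x\<in>S. \<Sum>y\<in>T. (\<lambda>(x0, x1). Wf H J' nu j0 x0 x1) x)"
      unfolding sum.cartesian_product by (rule sum.cong) auto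
    then show ?thesis by (simp add: sum_distrib_left)
  qed
  finally have 1: "(\<Sum>p\<in>Vpts V J \<times> Vpts V J. G p) = real (card T) * (\<Sum>p\<in>S. (\<lambda>(x0, x1). Wf H J' nu j0 x0 x1) p)" .
  have 2: "card (Vpts V J \<times> Vpts V J) = card S * card T"
    using bij_betw_same_card[OF bij] by (simp add: card_cartesian_product)
  have "card T > 0" using finT neT by (simp add: card_gt_0_iff)
  then show ?thesis
    unfolding avg_def G_def[symmetric] S_def[symmetric] 1 2 by simp
qed

lemma Np_nonneg:
  assumes "e \<in> H" "e \<subseteq> J" "x0 \<in> Vpts V J" "x1 \<in> Vpts V J"
    and nu0: "\<And>e x. e \<in> H \<Longrightarrow> x \<in> Vpts V e \<Longrightarrow> 0 \<le> nu e x"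
  shows "0 \<le> Np J' nu e x0 x1"
  unfolding Np_def using assms cpt_in_Vpts[of e J x0 V x1] by (auto intro!: prod_nonneg simp: Vpts_def)

lemma Fp_le:
  assumes "e \<in> H" "e \<subseteq> J" "J' \<subseteq> e" "x0 \<in> Vpts V J" "x1 \<in> Vpts V J"
    and fle: "\<And>e x. e \<in> H \<Longrightarrow> x \<in> Vpts V e \<Longrightarrow> \<bar>f e x\<bar> \<le> nu e x"
  shows "\<bar>Fp J' f e x0 x1\<bar> \<le> Np J' nu e x0 x1"
proof -
  have "e \<inter> J' = J'" using assms by auto
  then show ?thesis
    unfolding Fp_def Np_def abs_prod using assms cpt_in_Vpts[of e J x0 V x1]
    by (auto intro!: prod_mono simp: Vpts_def)
qed

lemma AW_bound:
  assumes fH: "finite H" and HJ: "\<And>e. e \<in> H \<Longrightarrow> e \<subseteq> J" and x: "x0 \<in> Vpts V J" "x1 \<in> Vpts V J"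
    and nu0: "\<And>e x. e \<in> H \<Longrightarrow> x \<in> Vpts V e \<Longrightarrow> 0 \<le> nu e x"
    and fle: "\<And>e x. e \<in> H \<Longrightarrow> x \<in> Vpts V e \<Longrightarrow> \<bar>f e x\<bar> \<le> nu e x"
  shows "\<bar>Af H J' f nu j0 x0 x1\<bar> \<le> Wf H J' nu j0 x0 x1"
proof -
  have s: "{e\<in>H. j0 \<notin> e} = {e\<in>H. J' \<subseteq> e \<and> j0 \<notin> e} \<union> {e\<in>H. \<not> J' \<subseteq> e \<and> j0 \<notin> e}" by auto
  have W: "Wf H J' nu j0 x0 x1 = (\<Prod>e\<in>{e\<in>H. J' \<subseteq> e \<and> j0 \<notin> e}. Np J' nu e x0 x1) * (\<Prod>e\<in>{e\<in>H. \<not> J' \<subseteq> e \<and> j0 \<notin> e}. Np J' nu e x0 x1)"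
    unfolding Wf_def s using fH by (intro prod.union_disjoint) auto
  have 1: "\<bar>\<Prod>e\<in>{e\<in>H. J' \<subseteq> e \<and> j0 \<notin> e}. Fp J' f e x0 x1\<bar> \<le> (\<Prod>e\<in>{e\<in>H. J' \<subseteq> e \<and> j0 \<notin> e}. Np J' nu e x0 x1)"
    unfolding abs_prod using Fp_le[OF _ HJ _ x fle] by (intro prod_mono) auto
  have 2: "\<bar>\<Prod>e\<in>{e\<in>H. \<not> J' \<subseteq> e \<and> j0 \<notin> e}. Np J' nu e x0 x1\<bar> = (\<Prod>e\<in>{e\<in>H. \<not> J' \<subseteq> e \<and> j0 \<notin> e}. Np J' nu e x0 x1)"
    using Np_nonneg[OF _ HJ x nu0] by (intro abs_of_nonneg prod_nonneg) auto
  show ?thesis unfolding Af_def W abs_mult 2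
    by (rule mult_right_mono[OF 1]) (use Np_nonneg[OF _ HJ x nu0] in \<open>auto intro!: prod_nonneg\<close>)
qed

lemma W_nonneg:
  assumes HJ: "\<And>e. e \<in> H \<Longrightarrow> e \<subseteq> J" and x: "x0 \<in> Vpts V J" "x1 \<in> Vpts V J"
    and nu0: "\<And>e x. e \<in> H \<Longrightarrow> x \<in> Vpts V e \<Longrightarrow> 0 \<le> nu e x"
  shows "0 \<le> Wf H J' nu j0 x0 x1"
  unfolding Wf_def using Np_nonneg[OF _ HJ x nu0] by (auto intro!: prod_nonneg)

lemma W_upd: "Wf H J' nu j0 (x0(j0:=a)) (x1(j0:=b)) = Wf H J' nu j0 x0 x1"
  unfolding Wf_def Np_def by (intro prod.cong refl) (simp add: cpt_upd_notin)

lemma final_arith: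
  fixes a w b k m :: real
  assumes ab: "a\<^sup>2 \<le> w * b" and w0: "0 \<le> w" and b0: "0 \<le> b" and m0: "m > 0" and k0: "k \<ge> 0"
  shows "\<bar>a / (k * m)\<bar> \<le> sqrt (w * m / (k * m)) * sqrt \<bar>b / (k * (m * m))\<bar>"
proof (cases "k = 0")
  case False
  then have k: "k > 0" using k0 by linarith
  have km: "k * m > 0" using k m0 by (rule mult_pos_pos)
  have e1: "w * m / (k * m) = w / k" using m0 by (metis mult_divide_mult_cancel_right less_irrefl)
  have e2: "\<bar>b / (k * (m * m))\<bar> = b / (k * (m * m))" using k m0 b0 by (intro abs_of_nonneg divide_nonneg_pos) auto
  have e3: "w / k * (b / (k * (m * m))) = (w * b) / ((k * m)\<^sup>2)"
    by (simp only: times_divide_times_eq power2_eq_square mult_ac)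
  have e4: "sqrt ((w * b) / ((k * m)\<^sup>2)) = sqrt (w * b) / (k * m)"
    using km by (simp only: real_sqrt_divide real_sqrt_abs abs_of_pos)
  have r: "sqrt (w * m / (k * m)) * sqrt \<bar>b / (k * (m * m))\<bar> = sqrt (w * b) / (k * m)"
    unfolding e1 e2 real_sqrt_mult[symmetric] e3 e4 ..
  have "\<bar>a\<bar> \<le> sqrt (w * b)" using ab by (intro real_le_rsqrt) simp
  then have "\<bar>a\<bar> / (k * m) \<le> sqrt (w * b) / (k * m)" using km by (intro divide_right_mono) auto
  moreover have "\<bar>a / (k * m)\<bar> = \<bar>a\<bar> / (k * m)" using km by (simp only: abs_divide abs_of_pos)
  ultimately show ?thesis unfolding r by linarith
qed simp

lemma main_fixed:
  fixes J :: "'j set" and V :: "'j \<Rightarrow> 'v set" and H :: "'j set set"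
    and nu f :: "'j set \<Rightarrow> ('j \<Rightarrow> 'v) \<Rightarrow> real"
  assumes HJ: "\<And>e. e \<in> H \<Longrightarrow> e \<subseteq> J" and fJ: "finite J"
    and finV: "\<And>j. j \<in> J \<Longrightarrow> finite (V j)" and neV: "\<And>j. j \<in> J \<Longrightarrow> V j \<noteq> {}"
    and J'J: "J' \<subseteq> J" and j0J: "j0 \<in> J" and j0J': "j0 \<notin> J'"
    and nu0: "\<And>e x. e \<in> H \<Longrightarrow> x \<in> Vpts V e \<Longrightarrow> 0 \<le> nu e x"
    and fle: "\<And>e x. e \<in> H \<Longrightarrow> x \<in> Vpts V e \<Longrightarrow> \<bar>f e x\<bar> \<le> nu e x"
  shows "\<bar>Q J V H nu f J'\<bar> \<le> sqrt (avg {(x0, x1). x0 \<in> Vpts V J \<and> x1 \<in> Vpts V J \<and> (\<forall>j\<in>J - J'. x0 j = x1 j)} (\<lambda>(x0, x1). Wf H J' nu j0 x0 x1))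
     * sqrt \<bar>Q J V H nu f (insert j0 J')\<bar>"
proof -
  have fH: "finite H" using HJ fJ by (meson Pow_iff finite_Pow_iff rev_finite_subset subsetI)
  have fJ': "finite J'" using J'J fJ by (rule finite_subset)
  obtain c where c: "c \<in> V j0" using neV[OF j0J] by auto
  define S1 where "S1 = {(x0, x1). x0 \<in> Vpts V J \<and> x1 \<in> Vpts V J \<and> (\<forall>j\<in>J - J'. x0 j = x1 j)}"
  define S2 where "S2 = {(x0, x1). x0 \<in> Vpts V J \<and> x1 \<in> Vpts V J \<and> (\<forall>j\<in>J - insert j0 J'. x0 j = x1 j)}"
  define U where "U = {(x0, x1). x0 \<in> Vpts V J \<and> x1 \<in> Vpts V J \<and> (\<forall>j\<in>J - J'. x0 j = x1 j) \<and> x0 j0 = c \<and> x1 j0 = c}"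
  define e1 where "e1 = (\<lambda>((x0::'j\<Rightarrow>'v, x1::'j\<Rightarrow>'v), y). (x0(j0:=y), x1(j0:=y)))"
  define e2 where "e2 = (\<lambda>((x0::'j\<Rightarrow>'v, x1::'j\<Rightarrow>'v), (y0, y1)). (x0(j0:=y0), x1(j0:=y1)))"
  have bij1: "bij_betw e1 (U \<times> V j0) S1"
  proof (rule bij_betw_byWitness[where f'="\<lambda>(x0, x1). ((x0(j0:=c), x1(j0:=c)), x0 j0)"])
    show "\<forall>a\<in>U \<times> V j0. (\<lambda>(x0, x1). ((x0(j0 := c), x1(j0 := c)), x0 j0)) (e1 a) = a"
      by (auto simp: e1_def U_def fun_eq_iff)
    show "\<forall>a'\<in>S1. e1 ((\<lambda>(x0, x1). ((x0(j0 := c), x1(j0 := c)), x0 j0)) a') = a'"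
      using j0J j0J' by (auto simp: e1_def S1_def fun_eq_iff)
    show "e1 ` (U \<times> V j0) \<subseteq> S1"
      using j0J by (auto simp: e1_def U_def S1_def Vpts_def PiE_def extensional_def Pi_def)
    show "(\<lambda>(x0, x1). ((x0(j0 := c), x1(j0 := c)), x0 j0)) ` S1 \<subseteq> U \<times> V j0"
      using j0J j0J' c by (auto simp: U_def S1_def Vpts_def PiE_def extensional_def Pi_def)
  qed
  have bij2: "bij_betw e2 (U \<times> (V j0 \<times> V j0)) S2"
  proof (rule bij_betw_byWitness[where f'="\<lambda>(x0, x1). ((x0(j0:=c), x1(j0:=c)), (x0 j0, x1 j0))"])
    show "\<forall>a\<in>U \<times> (V j0 \<times> V j0). (\<lambda>(x0, x1). ((x0(j0:=c), x1(j0:=c)), (x0 j0, x1 j0))) (e2 a) = a"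
      by (auto simp: e2_def U_def fun_eq_iff)
    show "\<forall>a'\<in>S2. e2 ((\<lambda>(x0, x1). ((x0(j0:=c), x1(j0:=c)), (x0 j0, x1 j0))) a') = a'"
      by (auto simp: e2_def S2_def fun_eq_iff)
    show "e2 ` (U \<times> (V j0 \<times> V j0)) \<subseteq> S2"
      using j0J by (auto simp: e2_def U_def S2_def Vpts_def PiE_def extensional_def Pi_def split: if_splits)
    show "(\<lambda>(x0, x1). ((x0(j0:=c), x1(j0:=c)), (x0 j0, x1 j0))) ` S2 \<subseteq> U \<times> (V j0 \<times> V j0)"
      using j0J j0J' c by (auto simp: U_def S2_def Vpts_def PiE_def extensional_def Pi_def)
  qed
  define A where "A u = Af H J' f nu j0 (fst u) (snd u)" for u :: "('j\<Rightarrow>'v) \<times> ('j\<Rightarrow>'v)"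
  define W where "W u = Wf H J' nu j0 (fst u) (snd u)" for u :: "('j\<Rightarrow>'v) \<times> ('j\<Rightarrow>'v)"
  define B where "B u y = Bf H J' f nu j0 (fst u) (snd u) y" for u :: "('j\<Rightarrow>'v) \<times> ('j\<Rightarrow>'v)" and y
  define s where "s u = (\<Sum>y\<in>V j0. B u y)" for u
  define I1 where "I1 = (\<lambda>(x0, x1). (\<Prod>e\<in>{e\<in>H. J' \<subseteq> e}. \<Prod>w\<in>cube J'. f e (cpt e x0 x1 w)) *
    (\<Prod>e\<in>{e\<in>H. \<not> J' \<subseteq> e}. \<Prod>w\<in>cube (e \<inter> J'). nu e (cpt e x0 x1 w)))"
  define I2 where "I2 = (\<lambda>(x0, x1). (\<Prod>e\<in>{e\<in>H. insert j0 J' \<subseteq> e}. \<Prod>w\<in>cube (insert j0 J'). f e (cpt e x0 x1 w)) *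
    (\<Prod>e\<in>{e\<in>H. \<not> insert j0 J' \<subseteq> e}. \<Prod>w\<in>cube (e \<inter> insert j0 J'). nu e (cpt e x0 x1 w)))"
  have Q1: "Q J V H nu f J' = avg S1 I1" by (simp add: Q_def S1_def I1_def)
  have Q2: "Q J V H nu f (insert j0 J') = avg S2 I2" by (simp add: Q_def S2_def I2_def)
  have sum1: "(\<Sum>p\<in>S1. I1 p) = (\<Sum>u\<in>U. A u * s u)"
  proof -
    have "(\<Sum>p\<in>S1. I1 p) = (\<Sum>p\<in>U \<times> V j0. I1 (e1 p))"
      by (rule sum.reindex_bij_betw[OF bij1, symmetric])
    also have "\<dots> = (\<Sum>p\<in>U \<times> V j0. A (fst p) * B (fst p) (snd p))"
      by (rule sum.cong[OF refl]) (auto simp: I1_def e1_def A_def B_def integrand1[OF fH])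
    also have "\<dots> = (\<Sum>u\<in>U. \<Sum>y\<in>V j0. A u * B u y)"
      unfolding sum.cartesian_product by (rule sum.cong) auto
    also have "\<dots> = (\<Sum>u\<in>U. A u * s u)" by (simp add: s_def sum_distrib_left)
    finally show ?thesis .
  qed
  have sum2: "(\<Sum>p\<in>S2. I2 p) = (\<Sum>u\<in>U. W u * (s u)\<^sup>2)"
  proof -
    have "(\<Sum>p\<in>S2. I2 p) = (\<Sum>p\<in>U \<times> (V j0 \<times> V j0). I2 (e2 p))"
      by (rule sum.reindex_bij_betw[OF bij2, symmetric])
    also have "\<dots> = (\<Sum>p\<in>U \<times> (V j0 \<times> V j0). W (fst p) * (B (fst p) (fst (snd p)) * B (fst p) (snd (snd p))))"
      by (rule sum.cong[OF refl]) (auto simp only: I2_def e2_def W_def B_def case_prod_conv fst_conv snd_conv integrand2[OF fH fJ' j0J'])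
    also have "\<dots> = (\<Sum>u\<in>U. \<Sum>q\<in>V j0 \<times> V j0. W u * (B u (fst q) * B u (snd q)))"
      unfolding sum.cartesian_product by (rule sum.cong) auto
    also have "\<dots> = (\<Sum>u\<in>U. W u * (s u)\<^sup>2)"
    proof (rule sum.cong[OF refl])
      fix u
      have "(\<Sum>q\<in>V j0 \<times> V j0. B u (fst q) * B u (snd q)) = (\<Sum>y0\<in>V j0. \<Sum>y1\<in>V j0. B u y0 * B u y1)"
        unfolding sum.cartesian_product by (rule sum.cong) auto
      also have "\<dots> = (s u)\<^sup>2" by (simp add: s_def sum_product power2_eq_square)
      finally show "(\<Sum>q\<in>V j0 \<times> V j0. W u * (B u (fst q) * B u (snd q))) = W u * (s u)\<^sup>2"
        by (simp add: sum_distrib_left[symmetric])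
    qed
    finally show ?thesis .
  qed
  have sum3: "(\<Sum>p\<in>S1. (\<lambda>(x0, x1). Wf H J' nu j0 x0 x1) p) = (\<Sum>u\<in>U. W u) * real (card (V j0))"
  proof -
    have "(\<Sum>p\<in>S1. (\<lambda>(x0, x1). Wf H J' nu j0 x0 x1) p) = (\<Sum>p\<in>U \<times> V j0. (\<lambda>(x0, x1). Wf H J' nu j0 x0 x1) (e1 p))"
      by (rule sum.reindex_bij_betw[OF bij1, symmetric])
    also have "\<dots> = (\<Sum>p\<in>U \<times> V j0. W (fst p))"
      by (rule sum.cong[OF refl]) (auto simp: e1_def W_def W_upd)
    also have "\<dots> = (\<Sum>u\<in>U. \<Sum>y\<in>V j0. W u)"
      unfolding sum.cartesian_product by (rule sum.cong) auto
    also have "\<dots> = (\<Sum>u\<in>U. W u) * real (card (V j0))" by (simp add: sum_distrib_right mult.commute)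
    finally show ?thesis .
  qed
  have c1: "card S1 = card U * card (V j0)"
    using bij_betw_same_card[OF bij1] by (simp add: card_cartesian_product)
  have c2: "card S2 = card U * (card (V j0) * card (V j0))"
    using bij_betw_same_card[OF bij2] by (simp add: card_cartesian_product)
  have Uin: "u \<in> U \<Longrightarrow> fst u \<in> Vpts V J \<and> snd u \<in> Vpts V J" for u by (auto simp: U_def)
  have cs: "(\<Sum>u\<in>U. A u * s u)\<^sup>2 \<le> (\<Sum>u\<in>U. W u) * (\<Sum>u\<in>U. W u * (s u)\<^sup>2)"
  proof (rule cs_weighted)
    fix u assume u: "u \<in> U"
    show "\<bar>A u\<bar> \<le> W u" unfolding A_def W_def
      by (rule AW_bound[where V=V and nu=nu and f=f and J=J]) (use fH HJ Uin[OF u] nu0 fle in auto)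
  qed
  have W0: "0 \<le> (\<Sum>u\<in>U. W u)"
    by (rule sum_nonneg) (use Uin W_nonneg[where V=V and nu=nu and J=J and H=H] HJ nu0 in \<open>force simp: W_def\<close>)
  have b0: "0 \<le> (\<Sum>u\<in>U. W u * (s u)\<^sup>2)"
    by (rule sum_nonneg) (use Uin W_nonneg[where V=V and nu=nu and J=J and H=H] HJ nu0 in \<open>force simp: W_def\<close>)
  have m0: "real (card (V j0)) > 0" using finV[OF j0J] neV[OF j0J] by (simp add: card_gt_0_iff)
  show ?thesis
    unfolding Q1 Q2 S1_def[symmetric] avg_def sum1 sum2 sum3 c1 c2 of_nat_mult
    by (rule final_arith[OF cs W0 b0 m0]) simp
qed

theorem mainTheorem9:
  fixes J :: "'j set" and V :: "nat \<Rightarrow> 'j \<Rightarrow> 'v set" and d :: nat and H :: "'j set set"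
    and \<nu> :: "nat \<Rightarrow> 'j set \<Rightarrow> ('j \<Rightarrow> 'v) \<Rightarrow> real"
  assumes "hypergraph_system J V d H"
    and "pseudorandom J V H \<nu>"
  shows "\<forall>J' j0. J' \<subset> J \<and> j0 \<in> J - J' \<longrightarrow>
    (\<exists>\<epsilon> :: nat \<Rightarrow> real. \<epsilon> \<longlonglongrightarrow> 0 \<and>
      (\<forall>N. \<forall>f :: 'j set \<Rightarrow> ('j \<Rightarrow> 'v) \<Rightarrow> real.
         (\<forall>e\<in>H. \<forall>x\<in>Vpts (V N) e. \<bar>f e x\<bar> \<le> \<nu> N e x) \<longrightarrow>
         \<bar>Q J (V N) H (\<nu> N) f J'\<bar> \<le> (1 + \<epsilon> N) * sqrt \<bar>Q J (V N) H (\<nu> N) f (insert j0 J')\<bar>))"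
proof (intro allI impI)
  fix J' j0 assume h: "J' \<subset> J \<and> j0 \<in> J - J'"
  have fJ: "finite J" and finV: "\<And>N j. j \<in> J \<Longrightarrow> finite (V N j)" and neV: "\<And>N j. j \<in> J \<Longrightarrow> V N j \<noteq> {}"
    and HJ: "\<And>e. e \<in> H \<Longrightarrow> e \<subseteq> J"
    using assms(1) unfolding hypergraph_system_def by auto
  have nu0: "\<And>N e x. e \<in> H \<Longrightarrow> x \<in> Vpts (V N) e \<Longrightarrow> 0 \<le> \<nu> N e x"
    using assms(2) unfolding pseudorandom_def system_of_measures_def by auto
  define G where "G N = avg (Vpts (V N) J \<times> Vpts (V N) J) (\<lambda>(x0, x1). \<Prod>e\<in>H. \<Prod>w\<in>cube e.
     if j0 \<notin> e \<and> (\<forall>j\<in>e - J'. \<not> w j) then \<nu> N e (cpt e x0 x1 w) else 1)" for N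
  have G1: "G \<longlonglongrightarrow> 1"
  proof -
    have "\<forall>n :: 'j set \<Rightarrow> ('j \<Rightarrow> bool) \<Rightarrow> bool.
        (\<lambda>N. avg (Vpts (V N) J \<times> Vpts (V N) J)
           (\<lambda>(x0, x1). \<Prod>e\<in>H. \<Prod>\<omega>\<in>cube e.
               if n e \<omega> then \<nu> N e (cpt e x0 x1 \<omega>) else 1)) \<longlonglongrightarrow> 1"
      using assms(2) unfolding pseudorandom_def by blast
    from spec[OF this, of "\<lambda>e w. j0 \<notin> e \<and> (\<forall>j\<in>e - J'. \<not> w j)"] show ?thesis
      unfolding G_def by simp
  qed
  have "(\<lambda>N. sqrt (G N) - 1) \<longlonglongrightarrow> sqrt 1 - 1"
    by (intro tendsto_diff tendsto_real_sqrt G1 tendsto_const)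
  then have eps: "(\<lambda>N. sqrt (G N) - 1) \<longlonglongrightarrow> 0" by simp
  show "\<exists>\<epsilon> :: nat \<Rightarrow> real. \<epsilon> \<longlonglongrightarrow> 0 \<and>
      (\<forall>N. \<forall>f :: 'j set \<Rightarrow> ('j \<Rightarrow> 'v) \<Rightarrow> real.
         (\<forall>e\<in>H. \<forall>x\<in>Vpts (V N) e. \<bar>f e x\<bar> \<le> \<nu> N e x) \<longrightarrow>
         \<bar>Q J (V N) H (\<nu> N) f J'\<bar> \<le> (1 + \<epsilon> N) * sqrt \<bar>Q J (V N) H (\<nu> N) f (insert j0 J')\<bar>)"
  proof (intro exI conjI allI impI)
    show "(\<lambda>N. sqrt (G N) - 1) \<longlonglongrightarrow> 0" by (rule eps)
    fix N and f :: "'j set \<Rightarrow> ('j \<Rightarrow> 'v) \<Rightarrow> real"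
    assume fle: "\<forall>e\<in>H. \<forall>x\<in>Vpts (V N) e. \<bar>f e x\<bar> \<le> \<nu> N e x"
    have GN: "G N = avg {(x0, x1). x0 \<in> Vpts (V N) J \<and> x1 \<in> Vpts (V N) J \<and> (\<forall>j\<in>J - J'. x0 j = x1 j)} (\<lambda>(x0, x1). Wf H J' (\<nu> N) j0 x0 x1)"
      unfolding G_def by (rule G_avg[OF HJ fJ finV neV]) (use h in auto)
    have "\<bar>Q J (V N) H (\<nu> N) f J'\<bar> \<le> sqrt (G N) * sqrt \<bar>Q J (V N) H (\<nu> N) f (insert j0 J')\<bar>"
      unfolding GN by (rule main_fixed[OF HJ fJ finV neV]) (use h nu0 fle in auto)
    then show "\<bar>Q J (V N) H (\<nu> N) f J'\<bar> \<le> (1 + (sqrt (G N) - 1)) * sqrt \<bar>Q J (V N) H (\<nu> N) f (insert j0 J')\<bar>"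
      by simp
  qed
qed

end
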